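(* Let $\mathcal{P}$ be a collection of cells with maximal rectangles $\mathcal{B}_1,\dots,\mathcal{B}_p$. Then there exists $i\in[p]$ such that $\overline{\mathcal{B}_i}=\mathcal{B}_i\setminus\bigcup_{j\in[p]\setminus\{i\}}\mathcal{B}_j\neq\emptyset$.
   Context: A cell is $[a,a+(1,1)]\subset\mathbb{R}^2$ with $a\in\mathbb{Z}^2$ its lower left corner; a collection of cells is a non-empty finite set of cells. For lower left corners $a\le b$ (componentwise), the rectangle $[A,B]$ is the set of cells whose lower left corner $c$ satisfies $a\le c\le b$. A maximal rectangle of $\mathcal{P}$ is a rectangle all of whose cells lie in $\mathcal{P}$ and not properly contained in another such rectangle. *)

theory Defs
  imports Main
begin

text \<open>A cell is identified with its lower left corner, a point of int x int.
  A collection of cells is a non-empty finite set of such corners.\<close>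

definition corner_le :: "int \<times> int \<Rightarrow> int \<times> int \<Rightarrow> bool" where
  "corner_le a b \<longleftrightarrow> fst a \<le> fst b \<and> snd a \<le> snd b"

definition cell_rect :: "int \<times> int \<Rightarrow> int \<times> int \<Rightarrow> (int \<times> int) set" where
  "cell_rect a b = {c. corner_le a c \<and> corner_le c b}"

definition is_rectangle :: "(int \<times> int) set \<Rightarrow> bool" where
  "is_rectangle R \<longleftrightarrow> (\<exists>a b. corner_le a b \<and> R = cell_rect a b)"

definition maximal_rectangle :: "(int \<times> int) set \<Rightarrow> (int \<times> int) set \<Rightarrow> bool" where
  "maximal_rectangle P R \<longleftrightarrow> is_rectangle R \<and> R \<subseteq> P \<and>
     \<not> (\<exists>R'. is_rectangle R' \<and> R' \<subseteq> P \<and> R \<subset> R')"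

end

theory Submission
  imports Defs
begin

lemma mem_cr[simp]: "(p1,p2) \<in> cell_rect (a1,a2) (b1,b2) \<longleftrightarrow> a1 \<le> p1 \<and> p1 \<le> b1 \<and> a2 \<le> p2 \<and> p2 \<le> b2"
  by (auto simp add: cell_rect_def corner_le_def)

lemma cr_mono: "a1' \<le> a1 \<Longrightarrow> a2' \<le> a2 \<Longrightarrow> b1 \<le> b1' \<Longrightarrow> b2 \<le> b2' \<Longrightarrow>
  cell_rect (a1,a2) (b1,b2) \<subseteq> cell_rect (a1',a2') (b1',b2')"
  by (auto simp: cell_rect_def corner_le_def)

lemma key:
  fixes P :: "(int \<times> int) set"
  assumes fin: "finite P"
    and x0min: "\<And>p. p \<in> P \<Longrightarrow> x0 \<le> fst p"
    and BP: "cell_rect (x0,l) (x1,h) \<subseteq> P"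
    and lo: "(x0, l - 1) \<notin> P" and hi: "(x0, h + 1) \<notin> P"
    and y: "l \<le> y" "y \<le> h" and rt: "(x1 + 1, y) \<notin> P"
    and x01: "x0 \<le> x1"
    and R: "is_rectangle R" "R \<subseteq> P" "(x0, y) \<in> R"
  shows "R \<subseteq> cell_rect (x0,l) (x1,h)"
proof -
  obtain a b where ab: "corner_le a b" "R = cell_rect a b" using R(1) is_rectangle_def by blast
  obtain a1 a2 where a: "a = (a1,a2)" by fastforce
  obtain b1 b2 where b: "b = (b1,b2)" by fastforce
  have c: "a1 \<le> x0" "x0 \<le> b1" "a2 \<le> y" "y \<le> b2"
    using R(3) ab a b by (auto simp: cell_rect_def corner_le_def)
  have "a \<in> R" using ab by (auto simp: cell_rect_def corner_le_def)
  hence "x0 \<le> a1" using R(2) x0min a by force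
  hence a1: "a1 = x0" using c by simp
  have "l \<le> a2"
  proof (rule ccontr)
    assume "\<not> l \<le> a2"
    hence "(x0, l - 1) \<in> R" using ab a b c a1 y by (auto simp: cell_rect_def corner_le_def)
    thus False using R(2) lo by blast
  qed
  moreover have "b2 \<le> h"
  proof (rule ccontr)
    assume "\<not> b2 \<le> h"
    hence "(x0, h + 1) \<in> R" using ab a b c a1 y by (auto simp: cell_rect_def corner_le_def)
    thus False using R(2) hi by blast
  qed
  moreover have "b1 \<le> x1"
  proof (rule ccontr)
    assume "\<not> b1 \<le> x1"
    moreover note x01
    ultimately have "(x1 + 1, y) \<in> R" using ab a b c a1 y by (auto simp: cell_rect_def corner_le_def)
    thus False using R(2) rt by blast
  qed
  ultimately show ?thesis using ab a b a1 by (auto simp: cell_rect_def corner_le_def)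
qed

theorem proposition2p6:
  fixes P :: "(int \<times> int) set"
  assumes "finite P" and "P \<noteq> {}"
  shows "\<exists>B. maximal_rectangle P B \<and>
           B - \<Union>{B'. maximal_rectangle P B' \<and> B' \<noteq> B} \<noteq> {}"
proof -
  define x0 where "x0 = Min (fst ` P)"
  have x0min: "\<And>p. p \<in> P \<Longrightarrow> x0 \<le> fst p" unfolding x0_def using assms by auto
  have "x0 \<in> fst ` P" unfolding x0_def using assms by auto
  then obtain y0 where y0: "(x0,y0) \<in> P" by force
  define F1 where "F1 = {cell_rect (x0,l) (x0,h) | l h. l \<le> h \<and> cell_rect (x0,l) (x0,h) \<subseteq> P}"
  have "F1 \<subseteq> Pow P" unfolding F1_def by auto
  hence fF1: "finite F1" using assms(1) finite_subset by blast
  have sing: "cell_rect (x0,y0) (x0,y0) \<subseteq> P"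
  proof
    fix p assume pm: "p \<in> cell_rect (x0,y0) (x0,y0)"
    obtain p1 p2 where p: "p = (p1,p2)" by fastforce
    show "p \<in> P" using pm p y0 by (metis mem_cr order_antisym)
  qed
  have "cell_rect (x0,y0) (x0,y0) \<in> F1" unfolding F1_def using sing by blast
  hence "F1 \<noteq> {}" by blast
  from finite_has_maximal[OF fF1 this] obtain C where C: "C \<in> F1" "\<And>D. D \<in> F1 \<Longrightarrow> C \<le> D \<Longrightarrow> C = D" by blast
  then obtain l h where lh: "l \<le> h" "C = cell_rect (x0,l) (x0,h)" "cell_rect (x0,l) (x0,h) \<subseteq> P"
    unfolding F1_def by blast
  have lo: "(x0, l - 1) \<notin> P"
  proof
    assume H: "(x0, l - 1) \<in> P"
    have "cell_rect (x0,l-1) (x0,h) \<subseteq> P"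
    proof
      fix p assume pm: "p \<in> cell_rect (x0,l-1) (x0,h)"
      obtain p1 p2 where p: "p = (p1,p2)" by fastforce
      show "p \<in> P"
      proof (cases "p2 = l - 1")
        case True then show ?thesis using H p pm by (auto dest: order_antisym)
      next
        case False then have "(p1,p2) \<in> cell_rect (x0,l) (x0,h)" using p pm by simp
        then show ?thesis using p lh(3) by blast
      qed
    qed
    hence "cell_rect (x0,l-1) (x0,h) \<in> F1" unfolding F1_def using lh by force
    moreover have "C \<le> cell_rect (x0,l-1) (x0,h)" unfolding lh(2) by (rule cr_mono) auto
    moreover have "(x0,l-1) \<notin> C" using lh by simp
    moreover have "(x0,l-1) \<in> cell_rect (x0,l-1) (x0,h)" using lh by simp
    ultimately show False using C(2) by blast
  qed
  have hi: "(x0, h + 1) \<notin> P"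
  proof
    assume H: "(x0, h + 1) \<in> P"
    have "cell_rect (x0,l) (x0,h+1) \<subseteq> P"
    proof
      fix p assume pm: "p \<in> cell_rect (x0,l) (x0,h+1)"
      obtain p1 p2 where p: "p = (p1,p2)" by fastforce
      show "p \<in> P"
      proof (cases "p2 = h + 1")
        case True then show ?thesis using H p pm by (auto dest: order_antisym)
      next
        case False then have "(p1,p2) \<in> cell_rect (x0,l) (x0,h)" using p pm by simp
        then show ?thesis using p lh(3) by blast
      qed
    qed
    hence "cell_rect (x0,l) (x0,h+1) \<in> F1" unfolding F1_def using lh by force
    moreover have "C \<le> cell_rect (x0,l) (x0,h+1)" unfolding lh(2) by (rule cr_mono) auto
    moreover have "(x0,h+1) \<notin> C" using lh by simp
    moreover have "(x0,h+1) \<in> cell_rect (x0,l) (x0,h+1)" using lh by simp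
    ultimately show False using C(2) by blast
  qed
  define F2 where "F2 = {cell_rect (x0,l) (x1,h) | x1. x0 \<le> x1 \<and> cell_rect (x0,l) (x1,h) \<subseteq> P}"
  have "F2 \<subseteq> Pow P" unfolding F2_def by auto
  hence fF2: "finite F2" using assms(1) finite_subset by blast
  have "C \<in> F2" unfolding F2_def using lh by auto
  hence "F2 \<noteq> {}" by blast
  from finite_has_maximal[OF fF2 this] obtain B where B: "B \<in> F2" "\<And>D. D \<in> F2 \<Longrightarrow> B \<le> D \<Longrightarrow> B = D" by blast
  then obtain x1 where x1: "x0 \<le> x1" "B = cell_rect (x0,l) (x1,h)" "cell_rect (x0,l) (x1,h) \<subseteq> P"
    unfolding F2_def by blast
  have "\<exists>y. l \<le> y \<and> y \<le> h \<and> (x1 + 1, y) \<notin> P"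
  proof (rule ccontr)
    assume "\<not> ?thesis"
    hence H: "\<And>y. l \<le> y \<Longrightarrow> y \<le> h \<Longrightarrow> (x1 + 1, y) \<in> P" by blast
    have "cell_rect (x0,l) (x1+1,h) \<subseteq> P"
    proof
      fix p assume pm: "p \<in> cell_rect (x0,l) (x1+1,h)"
      obtain p1 p2 where p: "p = (p1,p2)" by fastforce
      show "p \<in> P"
      proof (cases "p1 = x1 + 1")
        case True then show ?thesis using H p pm by (auto dest: order_antisym)
      next
        case False then have "(p1,p2) \<in> cell_rect (x0,l) (x1,h)" using p pm by simp
        then show ?thesis using p x1(3) by blast
      qed
    qed
    hence "cell_rect (x0,l) (x1+1,h) \<in> F2" unfolding F2_def using x1 by force
    moreover have "B \<le> cell_rect (x0,l) (x1+1,h)" unfolding x1(2) by (rule cr_mono) auto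
    moreover have "(x1+1,l) \<notin> B" using x1 by simp
    moreover have "(x1+1,l) \<in> cell_rect (x0,l) (x1+1,h)" using x1 lh by simp
    ultimately show False using B(2) by blast
  qed
  then obtain y where y: "l \<le> y" "y \<le> h" "(x1 + 1, y) \<notin> P" by blast
  have sub: "\<And>R. is_rectangle R \<Longrightarrow> R \<subseteq> P \<Longrightarrow> (x0, y) \<in> R \<Longrightarrow> R \<subseteq> B"
    using key[OF assms(1) x0min x1(3) lo hi y x1(1)] x1(2) by blast
  have cB: "(x0,y) \<in> B" using x1 y by simp
  have rB: "is_rectangle B" using x1 lh unfolding is_rectangle_def by (auto simp: corner_le_def)
  have mB: "maximal_rectangle P B" unfolding maximal_rectangle_def
    using rB x1(3) x1(2) sub cB by blast
  have "(x0,y) \<notin> \<Union>{B'. maximal_rectangle P B' \<and> B' \<noteq> B}"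
  proof
    assume "(x0,y) \<in> \<Union>{B'. maximal_rectangle P B' \<and> B' \<noteq> B}"
    then obtain B' where B': "maximal_rectangle P B'" "B' \<noteq> B" "(x0,y) \<in> B'" by blast
    hence "B' \<subseteq> B" using sub unfolding maximal_rectangle_def by blast
    thus False using B' rB x1(3) x1(2) unfolding maximal_rectangle_def by blast
  qed
  thus ?thesis using mB cB by blast
qed

end
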